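(* For Domineering on the $5 \times n$ board ($5$ rows, $n$ columns): the $5\times 1$ and $5 \times 3$ boards have outcome $V$, the $5\times 2$ and $5\times 4$ boards have outcome $H$, the $5 \times 5$ board has outcome ${\rm 2nd}$, and the $5 \times n$ board has outcome $H$ for every $n \ge 6$.
   Context: Domineering on an $m \times n$ board (a rectangle of $m$ rows and $n$ columns of unit cells): two players, Vera and Hepzibah, alternately place dominoes on empty cells; Vera places vertical dominoes (covering two vertically adjacent empty cells), Hepzibah places horizontal dominoes (covering two horizontally adjacent empty cells). A player who cannot move on her turn loses. The outcome class of a position is $V$ if Vera wins with optimal play regardless of who moves first, $H$ if Hepzibah wins regardless of who moves first, ${\rm 1st}$ if the player who moves first wins, and ${\rm 2nd}$ if the player who moves second wins. *)

theory Defs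
  imports Main
begin

text \<open>Cells are pairs (row, column). A position is the set of empty cells.\<close>
type_synonym cell = "nat \<times> nat"

datatype player = Vera | Hepzibah

fun opponent :: "player \<Rightarrow> player" where
  "opponent Vera = Hepzibah"
| "opponent Hepzibah = Vera"

definition board :: "nat \<Rightarrow> nat \<Rightarrow> cell set" where
  "board m n = {(r, c). r < m \<and> c < n}"

fun moves :: "player \<Rightarrow> cell set \<Rightarrow> cell set set" where
  "moves Vera S = {{(r, c), (Suc r, c)} | r c. (r, c) \<in> S \<and> (Suc r, c) \<in> S}"
| "moves Hepzibah S = {{(r, c), (r, Suc c)} | r c. (r, c) \<in> S \<and> (r, Suc c) \<in> S}"

text \<open>wins_first p S: player p, moving first from S, has a winning strategy;
  wins_second p S: player p wins when the opponent moves first from S.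
  Normal play: a player who cannot move loses.\<close>
inductive wins_first :: "player \<Rightarrow> cell set \<Rightarrow> bool"
  and wins_second :: "player \<Rightarrow> cell set \<Rightarrow> bool" where
  first: "d \<in> moves p S \<Longrightarrow> wins_second p (S - d) \<Longrightarrow> wins_first p S"
| second: "(\<forall>d \<in> moves (opponent p) S. wins_first p (S - d)) \<Longrightarrow> wins_second p S"

datatype outcome = OV | OH | OFirst | OSecond

fun has_outcome :: "cell set \<Rightarrow> outcome \<Rightarrow> bool" where
  "has_outcome S OV = (wins_first Vera S \<and> wins_second Vera S)"
| "has_outcome S OH = (wins_first Hepzibah S \<and> wins_second Hepzibah S)"
| "has_outcome S OFirst = (wins_first Vera S \<and> wins_first Hepzibah S)"
| "has_outcome S OSecond = (wins_second Vera S \<and> wins_second Hepzibah S)"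

end

theory Submission
  imports Defs
begin


lemma wf_inv: "wins_first p S \<Longrightarrow> \<exists>d\<in>moves p S. wins_second p (S - d)"
  by (erule wins_first.cases) auto

lemma ws_inv: "wins_second p S \<Longrightarrow> d \<in> moves (opponent p) S \<Longrightarrow> wins_first p (S - d)"
  by (erule wins_second.cases) auto

lemma opp_opp[simp]: "opponent (opponent p) = p" by (cases p) auto

definition vlive :: "cell set \<Rightarrow> cell set" where
  "vlive S = {(r,c). (r,c) \<in> S \<and> ((Suc r, c) \<in> S \<or> (r \<noteq> 0 \<and> (r - 1, c) \<in> S))}"

definition deadV :: "cell set \<Rightarrow> cell \<Rightarrow> bool" where
  "deadV S x = (x \<in> S \<and> x \<notin> vlive S \<and> (case x of (r,c) \<Rightarrow> (r \<noteq> 0 \<longrightarrow> (r - 1, c) \<notin> S) \<and> (Suc r, c) \<notin> S))"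

definition hcells :: "cell list \<Rightarrow> cell list" where
  "hcells ps = concat (map (\<lambda>(r,c). [(r,c),(r,Suc c)]) ps)"

lemma hcells_simps[simp]: "hcells [] = []" "hcells ((r,c)#ps) = (r,c)#(r,Suc c)#hcells ps"
  by (auto simp: hcells_def)

lemma vlive_sub: "vlive (S - d) \<subseteq> vlive S"
  by (auto simp: vlive_def)

lemma leaf_lemma:
  "finite S \<Longrightarrow> distinct (hcells ps) \<Longrightarrow> (\<forall>x\<in>set (hcells ps). deadV S x) \<Longrightarrow>
   (card (vlive S) div 2 < length ps \<longrightarrow> wins_first Hepzibah S) \<and>
   (card (vlive S) div 2 \<le> length ps \<longrightarrow> wins_second Hepzibah S)"
proof (induction "card S" arbitrary: S ps rule: less_induct)
  case less
  have fin_vl: "finite (vlive T)" if "finite T" for T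
    using that by (rule rev_finite_subset) (auto simp: vlive_def)
  show ?case
  proof (intro conjI impI)
    assume lt: "card (vlive S) div 2 < length ps"
    then obtain r c ps' where ps: "ps = (r,c)#ps'" by (cases ps) auto
    let ?d = "{(r,c),(r,Suc c)}"
    have dead: "deadV S (r,c)" "deadV S (r,Suc c)" using less.prems ps by auto
    hence inS: "(r,c) \<in> S" "(r,Suc c) \<in> S" by (auto simp: deadV_def)
    have mv: "?d \<in> moves Hepzibah S" using inS by auto
    have sub: "S - ?d \<subset> S" using inS by auto
    have cs: "card (S - ?d) < card S" using sub less.prems(1) by (meson psubset_card_mono)
    have dist': "distinct (hcells ps')" using less.prems(2) ps by auto
    have dead': "\<forall>x\<in>set (hcells ps'). deadV (S - ?d) x"
    proof
      fix x assume x: "x \<in> set (hcells ps')"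
      hence "deadV S x" using less.prems(3) ps by auto
      moreover have "x \<notin> ?d" using less.prems(2) ps x by auto
      ultimately show "deadV (S - ?d) x"
        by (auto simp: deadV_def vlive_def split: prod.splits)
    qed
    have "card (vlive (S - ?d)) \<le> card (vlive S)"
      using vlive_sub fin_vl less.prems(1) by (meson card_mono)
    hence "card (vlive (S - ?d)) div 2 \<le> length ps'" using lt ps
      by (metis (no_types, lifting) div_le_mono le_less_trans length_Cons less_Suc_eq_le)
    hence "wins_second Hepzibah (S - ?d)"
      using less.hyps[OF cs _ dist' dead'] less.prems(1) by auto
    thus "wins_first Hepzibah S" by (rule first[OF mv])
  next
    assume le: "card (vlive S) div 2 \<le> length ps"
    show "wins_second Hepzibah S"
    proof (rule second, rule ballI)
      fix d assume "d \<in> moves (opponent Hepzibah) S"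
      then obtain r c where d: "d = {(r,c),(Suc r,c)}" and inS: "(r,c) \<in> S" "(Suc r,c) \<in> S" by auto
      have cs: "card (S - d) < card S" using inS d less.prems(1)
        by (metis Diff_iff card_Diff1_less card_Diff_subset_Int card_mono diff_le_self
            finite_Diff insertCI le_less_trans Diff_subset order_le_less_trans psubsetI subsetI
            psubset_card_mono)
      have dvl: "d \<subseteq> vlive S" using inS d by (auto simp: vlive_def)
      have dead': "\<forall>x\<in>set (hcells ps). deadV (S - d) x"
      proof
        fix x assume x: "x \<in> set (hcells ps)"
        hence dx: "deadV S x" using less.prems(3) by auto
        hence "x \<notin> d" using dvl by (auto simp: deadV_def)
        thus "deadV (S - d) x" using dx
          by (auto simp: deadV_def vlive_def split: prod.splits)
      qed
      have "vlive (S - d) \<subseteq> vlive S - d" by (auto simp: vlive_def)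
      hence "card (vlive (S - d)) \<le> card (vlive S - d)"
        using fin_vl less.prems(1) by (meson card_mono finite_Diff)
      also have "\<dots> = card (vlive S) - 2" using dvl d fin_vl[OF less.prems(1)]
        by (simp add: card_Diff_subset)
      finally have "card (vlive (S - d)) div 2 < length ps"
        using le d dvl card_mono[OF fin_vl[OF less.prems(1)] dvl] by (auto)
      thus "wins_first Hepzibah (S - d)"
        using less.hyps[OF cs _ less.prems(2) dead'] less.prems(1) by auto
    qed
  qed
qed



fun step :: "player \<Rightarrow> cell \<Rightarrow> cell" where
  "step Vera (r,c) = (Suc r, c)"
| "step Hepzibah (r,c) = (r, Suc c)"

lemma moves_eq: "moves p S = (\<lambda>x. {x, step p x}) ` {x. x \<in> S \<and> step p x \<in> S}"
  by (cases p) (auto, blast+)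

lemma map_moves:
  assumes inj: "inj f" and st: "\<And>x. f (step p x) = step q (f x)"
  shows "moves q (f ` S) = (image f) ` moves p S"
proof -
  have "{y. y \<in> f ` S \<and> step q y \<in> f ` S} = f ` {x. x \<in> S \<and> step p x \<in> S}"
  proof (intro set_eqI iffI)
    fix y assume "y \<in> {y. y \<in> f ` S \<and> step q y \<in> f ` S}"
    then obtain x z where x: "y = f x" "x \<in> S" "z \<in> S" "step q y = f z" by auto
    hence "f (step p x) = f z" using st by simp
    hence "step p x = z" using inj by (simp add: inj_eq)
    thus "y \<in> f ` {x. x \<in> S \<and> step p x \<in> S}" using x by auto
  next
    fix y assume "y \<in> f ` {x. x \<in> S \<and> step p x \<in> S}"
    thus "y \<in> {y. y \<in> f ` S \<and> step q y \<in> f ` S}" using st by (auto simp flip: st)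
  qed
  thus ?thesis unfolding moves_eq using st by (auto simp: image_image)
qed

lemma map_lemma:
  assumes inj: "inj f" and g: "\<And>p. g (opponent p) = opponent (g p)"
    and st: "\<And>p x. f (step p x) = step (g p) (f x)"
  shows "wins_first p S \<Longrightarrow> wins_first (g p) (f ` S)"
    and "wins_second p S \<Longrightarrow> wins_second (g p) (f ` S)"
proof (induction rule: wins_first_wins_second.inducts)
  case (first d p S)
  have "f ` d \<in> moves (g p) (f ` S)" using first map_moves[OF inj st] by auto
  moreover have "f ` S - f ` d = f ` (S - d)" using inj by (simp add: image_set_diff)
  ultimately show ?case using first by (metis wins_first_wins_second.first)
next
  case (second p S)
  show ?case
  proof (rule wins_first_wins_second.second, rule ballI)
    fix d assume "d \<in> moves (opponent (g p)) (f ` S)"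
    hence "d \<in> moves (g (opponent p)) (f ` S)" by (simp add: g)
    then obtain d' where d': "d' \<in> moves (opponent p) S" "d = f ` d'" using map_moves[OF inj st] by auto
    have "f ` S - f ` d' = f ` (S - d')" using inj by (simp add: image_set_diff)
    thus "wins_first (g p) (f ` S - d)" using second d' by auto
  qed
qed

lemma swap_step: "prod.swap (step p x) = step (opponent p) (prod.swap x)"
  by (cases p; cases x) auto

lemma swap_first: "wins_first p S \<Longrightarrow> wins_first (opponent p) (prod.swap ` S)"
  and swap_second: "wins_second p S \<Longrightarrow> wins_second (opponent p) (prod.swap ` S)"
  using map_lemma[of prod.swap opponent] swap_step by auto

definition shift :: "nat \<Rightarrow> cell \<Rightarrow> cell" where "shift k x = (fst x, snd x + k)"

lemma shift_step: "shift k (step p x) = step (id p) (shift k x)"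
  by (cases p; cases x) (auto simp: shift_def)

lemma inj_shift: "inj (shift k)" by (auto simp: inj_def shift_def prod_eq_iff)

lemma shift_first: "wins_first p S \<Longrightarrow> wins_first p (shift k ` S)"
  and shift_second: "wins_second p S \<Longrightarrow> wins_second p (shift k ` S)"
  using map_lemma[of "shift k" id] shift_step inj_shift by auto

definition colsep :: "cell set \<Rightarrow> cell set \<Rightarrow> bool" where
  "colsep A B = (\<forall>x\<in>A. \<forall>y\<in>B. snd x \<noteq> snd y)"

lemma sum_lemma:
  "finite S1 \<Longrightarrow> finite S2 \<Longrightarrow> colsep S1 S2 \<Longrightarrow>
   (wins_second Hepzibah S1 \<longrightarrow> wins_second Hepzibah S2 \<longrightarrow> wins_second Hepzibah (S1 \<union> S2)) \<and>
   (wins_first Hepzibah S1 \<longrightarrow> wins_second Hepzibah S2 \<longrightarrow> wins_first Hepzibah (S1 \<union> S2)) \<and>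
   (wins_second Hepzibah S1 \<longrightarrow> wins_first Hepzibah S2 \<longrightarrow> wins_first Hepzibah (S1 \<union> S2))"
proof (induction "card S1 + card S2" arbitrary: S1 S2 rule: less_induct)
  case less
  have sepsub: "colsep A B" if "A \<subseteq> S1" "B \<subseteq> S2" for A B
    using less.prems(3) that by (auto simp: colsep_def)
  show ?case
  proof (intro conjI impI)
    assume w1: "wins_second Hepzibah S1" and w2: "wins_second Hepzibah S2"
    show "wins_second Hepzibah (S1 \<union> S2)"
    proof (rule second, rule ballI)
      fix d assume "d \<in> moves (opponent Hepzibah) (S1 \<union> S2)"
      then obtain r c where d: "d = {(r,c),(Suc r,c)}" and inS: "(r,c) \<in> S1 \<union> S2" "(Suc r,c) \<in> S1 \<union> S2" by auto
      show "wins_first Hepzibah (S1 \<union> S2 - d)"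
      proof (cases "(r,c) \<in> S1")
        case True
        hence in1: "(Suc r, c) \<in> S1" using inS less.prems(3) by (force simp: colsep_def)
        have dm: "d \<in> moves (opponent Hepzibah) S1" using True in1 d by auto
        have e: "S1 \<union> S2 - d = (S1 - d) \<union> S2" using True less.prems(3) d by (force simp: colsep_def)
        have "S1 - d \<subset> S1" using True d by auto
        hence cs: "card (S1 - d) + card S2 < card S1 + card S2"
          using less.prems(1) by (simp add: psubset_card_mono)
        have sep: "colsep (S1 - d) S2" using sepsub[of "S1 - d" S2] by auto
        show ?thesis unfolding e
          using less.hyps[OF cs _ _ sep] ws_inv[OF w1 dm] w2 less.prems by auto
      next
        case False
        hence in2: "(r, c) \<in> S2" "(Suc r, c) \<in> S2" using inS less.prems(3) by (force simp: colsep_def)+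
        have dm: "d \<in> moves (opponent Hepzibah) S2" using in2 d by auto
        have e: "S1 \<union> S2 - d = S1 \<union> (S2 - d)" using in2 less.prems(3) d by (force simp: colsep_def)
        have "S2 - d \<subset> S2" using in2 d by auto
        hence cs: "card S1 + card (S2 - d) < card S1 + card S2"
          using less.prems(2) by (simp add: psubset_card_mono)
        have sep: "colsep S1 (S2 - d)" using sepsub[of S1 "S2 - d"] by auto
        show ?thesis unfolding e
          using less.hyps[OF cs _ _ sep] ws_inv[OF w2 dm] w1 less.prems by auto
      qed
    qed
  next
    assume w1: "wins_first Hepzibah S1" and w2: "wins_second Hepzibah S2"
    obtain d where dm: "d \<in> moves Hepzibah S1" and w1': "wins_second Hepzibah (S1 - d)" using wf_inv[OF w1] by blast
    obtain r c where d: "d = {(r,c),(r,Suc c)}" and inS: "(r,c) \<in> S1" "(r,Suc c) \<in> S1" using dm by auto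
    have dm': "d \<in> moves Hepzibah (S1 \<union> S2)" using dm by auto
    have e: "S1 \<union> S2 - d = (S1 - d) \<union> S2" using inS less.prems(3) d by (force simp: colsep_def)
    have "S1 - d \<subset> S1" using inS d by auto
    hence cs: "card (S1 - d) + card S2 < card S1 + card S2"
      using less.prems(1) by (simp add: psubset_card_mono)
    have sep: "colsep (S1 - d) S2" using sepsub[of "S1 - d" S2] by auto
    have "wins_second Hepzibah (S1 \<union> S2 - d)" unfolding e
      using less.hyps[OF cs _ _ sep] w1' w2 less.prems by auto
    thus "wins_first Hepzibah (S1 \<union> S2)" by (rule first[OF dm'])
  next
    assume w1: "wins_second Hepzibah S1" and w2: "wins_first Hepzibah S2"
    obtain d where dm: "d \<in> moves Hepzibah S2" and w2': "wins_second Hepzibah (S2 - d)" using wf_inv[OF w2] by blast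
    obtain r c where d: "d = {(r,c),(r,Suc c)}" and inS: "(r,c) \<in> S2" "(r,Suc c) \<in> S2" using dm by auto
    have dm': "d \<in> moves Hepzibah (S1 \<union> S2)" using dm by auto
    have e: "S1 \<union> S2 - d = S1 \<union> (S2 - d)" using inS less.prems(3) d by (force simp: colsep_def)
    have "S2 - d \<subset> S2" using inS d by auto
    hence cs: "card S1 + card (S2 - d) < card S1 + card S2"
      using less.prems(2) by (simp add: psubset_card_mono)
    have sep: "colsep S1 (S2 - d)" using sepsub[of S1 "S2 - d"] by auto
    have "wins_second Hepzibah (S1 \<union> S2 - d)" unfolding e
      using less.hyps[OF cs _ _ sep] w1 w2' less.prems by auto
    thus "wins_first Hepzibah (S1 \<union> S2)" by (rule first[OF dm'])
  qed
qed



type_synonym rows = "bool list list"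

definition get :: "rows \<Rightarrow> cell \<Rightarrow> bool" where
  "get rs x = (case x of (r,c) \<Rightarrow> r < length rs \<and> c < length (rs ! r) \<and> rs ! r ! c)"

definition cellsR :: "rows \<Rightarrow> cell set" where "cellsR rs = {x. get rs x}"

definition delc :: "rows \<Rightarrow> cell \<Rightarrow> rows" where
  "delc rs x = (case x of (r,c) \<Rightarrow> rs[r := (rs ! r)[c := False]])"

definition allc :: "rows \<Rightarrow> cell list" where
  "allc rs = concat (map (\<lambda>r. map (\<lambda>c. (r,c)) [0..<length (rs ! r)]) [0..<length rs])"

definition vm :: "rows \<Rightarrow> cell list" where
  "vm rs = filter (\<lambda>(r,c). get rs (r,c) \<and> get rs (Suc r, c)) (allc rs)"

definition lvl :: "rows \<Rightarrow> cell list" where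
  "lvl rs = filter (\<lambda>(r,c). get rs (r,c) \<and> (get rs (Suc r,c) \<or> (r \<noteq> 0 \<and> get rs (r - 1,c)))) (allc rs)"

definition deadR :: "rows \<Rightarrow> cell \<Rightarrow> bool" where
  "deadR rs x = (case x of (r,c) \<Rightarrow> get rs (r,c) \<and> \<not> get rs (Suc r,c) \<and> \<not> (r \<noteq> 0 \<and> get rs (r - 1,c)))"

fun gp :: "bool list \<Rightarrow> nat \<Rightarrow> nat list" where
  "gp (True # True # xs) c = c # gp xs (c + 2)"
| "gp (x # xs) c = gp xs (c + 1)"
| "gp [] c = []"

definition spl :: "rows \<Rightarrow> cell list" where
  "spl rs = concat (map (\<lambda>r. map (\<lambda>c. (r,c)) (gp (map (\<lambda>c. deadR rs (r,c)) [0..<length (rs ! r)]) 0)) [0..<length rs])"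

definition leafok :: "bool \<Rightarrow> rows \<Rightarrow> bool" where
  "leafok b rs = (let ps = spl rs; n = length (lvl rs) div 2 in
     distinct (hcells ps) \<and> list_all (deadR rs) (hcells ps) \<and> (if b then n < length ps else n \<le> length ps))"

datatype cert = L | P nat nat cert | R "cert list"

fun check :: "bool \<Rightarrow> rows \<Rightarrow> cert \<Rightarrow> bool"
and checkall :: "rows \<Rightarrow> cell list \<Rightarrow> cert list \<Rightarrow> bool" where
  "check b rs L = leafok b rs"
| "check b rs (P r c t) = (b \<and> get rs (r,c) \<and> get rs (r,Suc c) \<and> check False (delc (delc rs (r,c)) (r,Suc c)) t)"
| "check b rs (R ts) = (\<not> b \<and> checkall rs (vm rs) ts)"
| "checkall rs [] [] = True"
| "checkall rs ((r,c) # ms) (t # ts) = (check True (delc (delc rs (r,c)) (Suc r,c)) t \<and> checkall rs ms ts)"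
| "checkall rs [] (t # ts) = False"
| "checkall rs (m # ms) [] = False"

lemma get_delc: "get (delc rs x) y = (get rs y \<and> y \<noteq> x)"
proof -
  obtain a b where x: "x = (a,b)" by (cases x)
  obtain a' b' where y: "y = (a',b')" by (cases y)
  show ?thesis unfolding x y get_def delc_def
    by (cases "a = a'"; cases "a' < length rs"; cases "b = b'") (auto simp: nth_list_update)
qed

lemma cellsR_delc: "cellsR (delc rs x) = cellsR rs - {x}"
  by (auto simp: cellsR_def get_delc)

lemma cellsR_allc: "cellsR rs \<subseteq> set (allc rs)"
  by (auto simp: cellsR_def get_def allc_def)

lemma finite_cellsR: "finite (cellsR rs)"
  using cellsR_allc by (rule finite_subset) simp

lemma vlive_lvl: "vlive (cellsR rs) \<subseteq> set (lvl rs)"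
proof
  fix x assume x: "x \<in> vlive (cellsR rs)"
  then obtain r c where xe: "x = (r,c)" by (cases x)
  have "x \<in> cellsR rs" using x by (auto simp: vlive_def)
  hence "x \<in> set (allc rs)" using cellsR_allc by auto
  thus "x \<in> set (lvl rs)" using x xe by (auto simp: vlive_def lvl_def cellsR_def)
qed

lemma deadR_deadV: "deadR rs x \<Longrightarrow> deadV (cellsR rs) x"
  by (cases x) (auto simp: deadR_def deadV_def vlive_def cellsR_def)

lemma leafok_sound:
  assumes "leafok b rs"
  shows "if b then wins_first Hepzibah (cellsR rs) else wins_second Hepzibah (cellsR rs)"
proof -
  let ?ps = "spl rs"
  have d: "distinct (hcells ?ps)" and dd: "\<forall>x\<in>set (hcells ?ps). deadV (cellsR rs) x"
    using assms deadR_deadV by (auto simp: leafok_def Let_def list_all_iff)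
  have "card (vlive (cellsR rs)) \<le> card (set (lvl rs))"
    by (rule card_mono[OF _ vlive_lvl]) simp
  also have "\<dots> \<le> length (lvl rs)" by (rule card_length)
  finally have c: "card (vlive (cellsR rs)) div 2 \<le> length (lvl rs) div 2" by (rule div_le_mono)
  note LL = leaf_lemma[OF finite_cellsR d dd]
  show ?thesis using assms c LL by (auto simp: leafok_def Let_def)
qed

lemma check_sound:
  "check b rs t \<Longrightarrow> (if b then wins_first Hepzibah (cellsR rs) else wins_second Hepzibah (cellsR rs))"
  "checkall rs ms ts \<Longrightarrow> (\<forall>(r,c)\<in>set ms. wins_first Hepzibah (cellsR rs - {(r,c),(Suc r,c)}))"
proof (induction b rs t and rs ms ts rule: check_checkall.induct)
  case (1 b rs)
  then show ?case using leafok_sound by simp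
next
  case (2 b rs r c t)
  have e: "cellsR (delc (delc rs (r,c)) (r,Suc c)) = cellsR rs - {(r,c),(r,Suc c)}"
    by (auto simp: cellsR_delc)
  have m: "{(r,c),(r,Suc c)} \<in> moves Hepzibah (cellsR rs)" using 2(2) by (auto simp: cellsR_def)
  show ?case using 2 e first[OF m] by auto
next
  case (3 b rs ts)
  have "\<forall>(r,c)\<in>set (vm rs). wins_first Hepzibah (cellsR rs - {(r,c),(Suc r,c)})" using 3 by auto
  hence "wins_second Hepzibah (cellsR rs)"
  proof -
    assume H: "\<forall>(r,c)\<in>set (vm rs). wins_first Hepzibah (cellsR rs - {(r,c),(Suc r,c)})"
    show ?thesis
    proof (rule second, rule ballI)
      fix d assume "d \<in> moves (opponent Hepzibah) (cellsR rs)"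
      then obtain r c where dd: "d = {(r,c),(Suc r,c)}" "get rs (r,c)" "get rs (Suc r,c)"
        by (auto simp: cellsR_def)
      have "(r,c) \<in> set (allc rs)" using dd cellsR_allc by (auto simp: cellsR_def)
      hence "(r,c) \<in> set (vm rs)" using dd by (auto simp: vm_def)
      thus "wins_first Hepzibah (cellsR rs - d)" using H dd by auto
    qed
  qed
  thus ?case using 3 by simp
next
  case (5 rs r c ms t ts)
  have e: "cellsR (delc (delc rs (r,c)) (Suc r,c)) = cellsR rs - {(r,c),(Suc r,c)}"
    by (auto simp: cellsR_delc)
  show ?case using 5 e by auto
qed auto



lemma board_cellsR: "board m n = cellsR (replicate m (replicate n True))"
  by (auto simp: board_def cellsR_def get_def)

lemma fin_board: "finite (board m n)"
  by (simp add: board_cellsR finite_cellsR)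

lemma board_split: "board 5 (a + b) = board 5 a \<union> shift a ` board 5 b"
  apply (auto simp: board_def shift_def image_iff)
  by (metis add.commute fst_conv le_add_diff_inverse2 nat_add_left_cancel_less not_less snd_conv)

lemma board_colsep: "colsep (board 5 a) (shift a ` board 5 b)"
  by (auto simp: colsep_def board_def shift_def)

lemma board_swap: "prod.swap ` board m n = board n m"
  by (auto simp: board_def image_iff)

definition hb :: "nat \<Rightarrow> bool" where
  "hb n = (wins_first Hepzibah (board 5 n) \<and> wins_second Hepzibah (board 5 n))"

lemma comb: "wins_second Hepzibah (board 5 a) \<Longrightarrow> hb b \<Longrightarrow> hb (a + b)"
  unfolding hb_def board_split
  using sum_lemma[OF fin_board finite_imageI[OF fin_board] board_colsep]
    shift_first[of Hepzibah "board 5 b" a] shift_second[of Hepzibah "board 5 b" a]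
  by blast

lemma c52f: "check True (replicate 5 (replicate 2 True)) (P 1 0 (R [(P 4 0 L),(P 4 0 L),(P 2 0 L),(P 2 0 L)]))"
  by code_simp
lemma c52s: "check False (replicate 5 (replicate 2 True)) (R [(P 3 0 L),(P 3 0 L),(P 3 0 L),(P 3 0 L),(P 1 0 L),(P 1 0 L),(P 1 0 L),(P 1 0 L)])"
  by code_simp
lemma c35f: "check True (replicate 3 (replicate 5 True)) (P 1 0 (R [(P 0 3 L),(P 2 2 L),(P 0 2 L),(P 0 2 L),(P 0 2 L),(P 0 2 L)]))"
  by code_simp
lemma c35s: "check False (replicate 3 (replicate 5 True)) (R [(P 1 1 (R [L,L,L,L])),(P 1 2 (R [L,L,L,L])),(P 1 0 (R [L,L,L,L])),(P 1 0 (R [L,L,L,L])),(P 1 0 (R [L,L,L,L])),(P 1 1 (R [L,L,L,L])),(P 1 2 (R [L,L,L,L])),(P 1 0 (R [L,L,L,L])),(P 1 0 (R [L,L,L,L])),(P 1 0 (R [L,L,L,L]))])"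
  by code_simp

lemma hb2: "hb 2"
  using check_sound(1)[OF c52f] check_sound(1)[OF c52s] by (simp add: hb_def board_cellsR)

lemma v53: "has_outcome (board 5 3) OV"
proof -
  have "wins_first Hepzibah (board 3 5)" "wins_second Hepzibah (board 3 5)"
    using check_sound(1)[OF c35f] check_sound(1)[OF c35s] by (simp_all add: board_cellsR)
  hence "wins_first Vera (board 5 3)" "wins_second Vera (board 5 3)"
    using swap_first[of Hepzibah "board 3 5"] swap_second[of Hepzibah "board 3 5"]
    by (simp_all add: board_swap)
  thus ?thesis by simp
qed

lemma v51: "has_outcome (board 5 1) OV"
proof -
  have noh: "moves Hepzibah S = {}" if "S \<subseteq> board 5 1" for S
    using that by (auto simp: board_def)
  have ws: "wins_second Vera S" if "S \<subseteq> board 5 1" for S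
  proof -
    have e: "moves (opponent Vera) S = {}" using noh[OF that] by simp
    show ?thesis by (rule second) (simp only: e ball_empty)
  qed
  have "{(0,0),(1,0)} \<in> moves Vera (board 5 1)" by (auto simp: board_def)
  moreover have "wins_second Vera (board 5 1 - {(0,0),(1,0)})" by (rule ws) auto
  ultimately have "wins_first Vera (board 5 1)" by (rule first)
  thus ?thesis using ws by simp
qed

lemma hb_even: "hb (2 * k + 2)"
proof (induction k)
  case 0 show ?case using hb2 by (metis add_0 mult_0_right)
next
  case (Suc k)
  have "hb (2 + (2 * k + 2))" by (rule comb) (use hb2 Suc in \<open>auto simp: hb_def\<close>)
  thus ?case by (simp add: algebra_simps)
qed


lemma main_from55:
  assumes h55: "wins_second Hepzibah (board 5 5)"
  shows "has_outcome (board 5 1) OV \<and> has_outcome (board 5 3) OV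
    \<and> has_outcome (board 5 2) OH \<and> has_outcome (board 5 4) OH
    \<and> has_outcome (board 5 5) OSecond
    \<and> (\<forall>n::nat. n \<ge> 6 \<longrightarrow> has_outcome (board 5 n) OH)"
proof -
  have hb4: "hb 4" using hb_even[of 1] by simp
  have v55: "wins_second Vera (board 5 5)"
    using swap_second[OF h55] by (simp add: board_swap)
  have big: "hb n" if "n \<ge> 6" for n
  proof (cases "even n")
    case True
    then obtain m where "n = 2 * m" by (auto elim: evenE)
    hence "n = 2 * (m - 1) + 2" using that by arith
    thus ?thesis using hb_even by simp
  next
    case False
    then obtain m where "n = 2 * m + 1" by (auto elim: oddE)
    hence k: "n = 5 + (2 * (m - 3) + 2)" using that by arith
    show ?thesis unfolding k by (rule comb[OF h55 hb_even])
  qed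
  show ?thesis using v51 v53 hb2 hb4 h55 v55 big by (auto simp: hb_def)
qed


definition B55 :: rows where "B55 = replicate 5 (replicate 5 True)"
definition k0 :: cert where "k0 = (P 1 1 (R [(P 3 0 (R [(P 2 2 L),(P 2 2 L),(P 2 3 L),(P 4 2 L),(P 2 2 L),(P 2 2 L),(P 2 2 L),(P 2 2 L)])),(P 3 0 (R [(P 2 2 L),(P 3 2 L),(P 2 3 L),(P 4 2 L),(P 2 2 L),(P 2 2 L),(P 2 2 L),(P 2 2 L)])),(P 3 0 (R [(P 3 2 L),L,(P 0 3 L),(P 0 3 L),(P 0 3 L),(P 0 3 L),(P 0 3 L)])),(P 3 0 (R [(P 2 2 L),L,(P 0 3 L),(P 0 2 L),(P 0 3 L),(P 0 3 L),(P 0 3 L)])),(P 3 1 (R [(P 2 3 L),(P 2 3 L),(P 0 3 L),(P 0 3 L),L,(P 0 3 L),(P 0 3 L),(P 0 3 L)])),(P 1 3 (R [(P 2 2 L),(P 2 3 L),(P 4 0 (R [(P 4 2 L),L,L,(P 4 3 L),(P 4 2 L)])),(P 3 2 L),(P 3 2 L),(P 3 3 L),(P 2 3 (R [L,L,(P 4 1 L),(P 4 0 L),(P 4 0 L)])),(P 3 2 L)])),(P 3 0 (R [(P 2 3 L),(P 2 3 L),(P 0 3 L),(P 0 3 L),L,(P 0 3 L),(P 0 3 L),(P 0 3 L)])),(P 3 0 (R [(P 4 2 L),(P 4 2 L),(P 0 2 L),L,L,(P 0 2 L),(P 0 3 L)])),(P 3 0 (R [(P 2 2 L),(P 2 2 L),(P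 0 3 L),(P 0 3 L),L,(P 0 3 L),(P 0 3 L)])),(P 1 3 (R [(P 3 2 L),(P 3 3 L),(P 3 1 L),(P 3 1 L),(P 2 2 L),(P 3 3 L),(P 3 1 L),(P 3 1 L)])),(P 3 2 (R [(P 2 0 L),(P 2 3 L),(P 0 3 L),(P 0 3 L),(P 0 3 L),(P 0 3 L),(P 0 3 L),(P 0 3 L)])),(P 1 3 (R [(P 3 3 L),(P 3 3 L),(P 3 0 L),(P 3 0 L),(P 3 3 L),(P 2 3 L),(P 2 0 L),(P 3 0 L)])),(P 3 0 (R [(P 2 2 L),(P 2 2 L),(P 0 3 L),(P 0 3 L),(P 0 3 L),(P 0 3 L),(P 0 3 L),(P 0 3 L)])),(P 1 3 (R [(P 3 1 L),(P 3 2 L),(P 3 0 L),(P 3 0 L),(P 3 1 L),(P 3 2 L),(P 3 0 L),(P 2 0 L)]))]))"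
lemma ck0: "check True (delc (delc B55 (0,0)) (Suc 0,0)) k0" by code_simp

definition k1 :: cert where "k1 = (P 1 2 (R [(P 3 0 (R [(P 2 2 L),(P 2 2 L),(P 2 3 L),(P 4 2 L),(P 2 2 L),(P 2 2 L),(P 2 2 L),(P 2 2 L)])),(P 3 1 (R [(P 2 3 L),(P 2 3 L),(P 2 3 L),(P 4 0 L),(P 4 3 L),(P 2 3 L),(P 2 0 L),(P 2 3 L)])),(P 3 1 (R [(P 2 3 L),(P 3 3 L),(P 4 0 L),(P 0 3 L),(P 2 3 L),(P 2 3 L),(P 2 3 L)])),(P 3 2 (R [(P 2 0 L),(P 3 0 L),(P 4 0 L),(P 4 0 L),(P 2 0 L),(P 2 0 L),(P 2 0 L)])),(P 3 1 (R [(P 2 3 L),(P 2 3 L),(P 3 3 L),L,(P 0 3 L),(P 2 3 L),(P 2 3 L)])),(P 3 2 (R [(P 4 0 L),(P 4 0 L),(P 4 0 L),(P 4 0 L),L,L,(P 4 3 L),(P 4 0 L)])),(P 3 0 (R [(P 2 3 L),(P 3 3 L),(P 3 3 L),(P 3 3 L),(P 2 0 L),(P 0 3 (R [L,(P 4 2 L),L,(P 2 0 L)])),(P 2 3 (R [L,(P 2 0 L),(P 0 3 L),(P 0 3 L)])),(P 2 3 (R [L,(P 2 0 L),(P 0 3 L),(P 0 3 L)]))])),(P 3 1 (R [(P 4 0 L),(P 4 0 L),(P 4 0 L),(P 4 0 L),L,L,(P 4 3 L),(P 4 0 L)])),(P 3 1 (R [(P 4 3 L),(P 4 3 L),(P 0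 3 L),(P 0 3 L),L,(P 4 3 L),(P 0 3 L)])),(P 3 1 (R [(P 2 2 L),(P 2 3 L),(P 2 3 L),(P 3 3 L),(P 4 3 L),(P 4 3 L),(P 2 0 L),(P 2 3 L)])),(P 3 2 (R [(P 2 0 L),(P 2 0 L),(P 2 3 L),(P 2 0 L),(P 2 3 L),(P 0 3 L),(P 2 0 L),(P 2 0 L)])),(P 3 0 (R [(P 2 2 L),(P 2 3 L),(P 2 3 L),(P 3 3 L),(P 4 3 L),(P 4 3 L),(P 2 0 L),(P 2 3 L)])),(P 3 1 (R [(P 2 0 L),(P 2 0 L),(P 2 3 L),(P 2 0 L),(P 2 3 L),(P 0 3 L),(P 2 0 L),(P 2 0 L)])),(P 3 2 (R [(P 2 0 L),(P 2 0 L),(P 3 0 L),(P 2 0 L),(P 4 0 L),(P 4 0 L),(P 2 0 L),(P 2 0 L)]))]))"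
lemma ck1: "check True (delc (delc B55 (0,1)) (Suc 0,1)) k1" by code_simp

definition k2 :: cert where "k2 = (P 1 0 (R [(P 3 0 (R [(P 2 2 L),(P 2 2 L),(P 2 3 L),(P 4 2 L),(P 2 2 L),(P 2 2 L),(P 2 2 L),(P 2 2 L)])),(P 3 0 (R [(P 2 2 L),(P 3 2 L),(P 2 3 L),(P 4 2 L),(P 2 2 L),(P 2 2 L),(P 2 2 L),(P 2 2 L)])),(P 3 0 (R [(P 3 2 L),L,(P 0 3 L),(P 0 3 L),(P 0 3 L),(P 0 3 L),(P 0 3 L)])),(P 3 0 (R [(P 2 2 L),L,(P 0 3 L),(P 0 3 L),(P 0 3 L),(P 0 3 L),(P 0 3 L)])),(P 3 1 (R [(P 2 3 L),(P 2 3 L),(P 0 3 L),(P 0 3 L),L,(P 0 3 L),(P 0 3 L),(P 0 3 L)])),(P 1 3 (R [(P 2 2 L),(P 2 3 L),(P 4 0 (R [(P 4 2 L),L,L,(P 4 3 L),(P 4 2 L)])),(P 3 2 L),(P 3 2 L),(P 3 3 L),(P 2 3 (R [L,L,(P 4 1 L),(P 4 0 L),(P 4 0 L)])),(P 3 2 L)])),(P 3 0 (R [(P 2 3 L),(P 2 3 L),(P 0 3 L),(P 0 3 L),L,(P 0 3 L),(P 0 3 L),(P 0 3 L)])),(P 3 0 (R [(P 4 2 L),(P 4 2 L),(P 0 3 L),L,L,(P 0 3 L),(P 0 3 L)])),(P 3 0 (R [(P 2 2 L),(P 2 2 L),(P 0 3 L),(P 0 3 L),L,(P 0 3 L),(P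 0 3 L)])),(P 1 3 (R [(P 3 2 L),(P 3 3 L),(P 3 1 L),(P 3 1 L),(P 2 2 L),(P 3 3 L),(P 3 1 L),(P 3 1 L)])),(P 3 2 (R [(P 2 0 L),(P 2 3 L),(P 0 3 L),(P 0 3 L),(P 0 3 L),(P 0 3 L),(P 0 3 L),(P 0 3 L)])),(P 1 3 (R [(P 3 3 L),(P 3 3 L),(P 3 0 L),(P 3 0 L),(P 3 3 L),(P 2 3 L),(P 2 0 L),(P 3 0 L)])),(P 3 0 (R [(P 2 2 L),(P 2 2 L),(P 0 3 L),(P 0 3 L),(P 0 3 L),(P 0 3 L),(P 0 3 L),(P 0 3 L)])),(P 1 3 (R [(P 3 1 L),(P 3 2 L),(P 3 0 L),(P 3 0 L),(P 3 1 L),(P 3 2 L),(P 3 0 L),(P 2 0 L)]))]))"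
lemma ck2: "check True (delc (delc B55 (0,2)) (Suc 0,2)) k2" by code_simp

definition k3 :: cert where "k3 = (P 1 1 (R [(P 3 0 (R [(P 2 2 L),(P 2 2 L),(P 2 3 L),(P 4 2 L),(P 2 2 L),(P 2 2 L),(P 2 2 L),(P 2 2 L)])),(P 3 1 (R [(P 2 3 L),(P 2 3 L),(P 2 3 L),(P 4 0 L),(P 4 3 L),(P 2 3 L),(P 2 0 L),(P 2 3 L)])),(P 3 1 (R [(P 2 3 L),(P 3 3 L),(P 4 0 L),(P 4 0 L),(P 2 3 L),(P 2 3 L),(P 2 3 L)])),(P 3 2 (R [(P 2 0 L),(P 3 0 L),(P 0 0 L),(P 4 0 L),(P 2 0 L),(P 2 0 L),(P 2 0 L)])),(P 3 1 (R [(P 2 3 L),(P 2 3 L),(P 0 0 L),L,(P 0 0 L),(P 0 0 L),(P 2 3 L)])),(P 3 2 (R [(P 4 0 L),(P 4 0 L),(P 4 0 L),(P 4 0 L),L,L,(P 4 3 L),(P 4 0 L)])),(P 3 3 (R [(P 3 0 L),(P 2 0 L),(P 3 0 L),(P 3 0 L),(P 0 0 (R [L,(P 4 0 L),L,(P 2 3 L)])),(P 2 3 L),(P 2 0 (R [(P 2 3 L),L,(P 0 0 L),(P 0 0 L)])),(P 2 0 (R [(P 2 3 L),L,(P 0 0 L),(P 0 0 L)]))])),(P 3 1 (R [(P 4 0 L),(P 4 0 L),(P 4 0 L),(P 4 0 L),L,L,(P 4 3 L),(P 4 0 L)])),(P 3 1 (R [(P 4 3 L),(P 4 3 L),(P 4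 0 L),(P 0 0 L),L,(P 4 3 L),(P 2 0 L)])),(P 3 1 (R [(P 2 2 L),(P 2 3 L),(P 2 3 L),(P 3 3 L),(P 4 3 L),(P 4 3 L),(P 2 0 L),(P 2 3 L)])),(P 3 2 (R [(P 2 0 L),(P 2 0 L),(P 2 3 L),(P 2 0 L),(P 0 0 L),(P 2 0 L),(P 2 0 L),(P 2 0 L)])),(P 3 0 (R [(P 2 2 L),(P 2 3 L),(P 2 3 L),(P 3 3 L),(P 4 3 L),(P 4 3 L),(P 2 0 L),(P 2 3 L)])),(P 3 1 (R [(P 2 0 L),(P 2 0 L),(P 2 3 L),(P 2 0 L),(P 0 0 L),(P 2 0 L),(P 2 0 L),(P 2 0 L)])),(P 3 2 (R [(P 2 0 L),(P 2 0 L),(P 3 0 L),(P 2 0 L),(P 4 0 L),(P 4 0 L),(P 2 0 L),(P 2 0 L)]))]))"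
lemma ck3: "check True (delc (delc B55 (0,3)) (Suc 0,3)) k3" by code_simp

definition k4 :: cert where "k4 = (P 1 2 (R [(P 3 2 (R [(P 2 0 L),(P 3 0 L),(P 4 0 L),(P 4 0 L),(P 2 0 L),(P 2 0 L),(P 2 0 L),(P 2 0 L)])),(P 3 1 (R [(P 2 3 L),(P 2 3 L),(P 2 3 L),(P 4 0 L),(P 4 3 L),(P 2 3 L),(P 2 0 L),(P 2 3 L)])),(P 3 2 (R [(P 3 0 L),L,(P 0 0 L),(P 0 0 L),(P 0 0 L),(P 0 0 L),(P 0 0 L)])),(P 3 2 (R [(P 3 0 L),L,(P 0 0 L),(P 0 0 L),(P 0 0 L),(P 0 0 L),(P 0 0 L)])),(P 3 2 (R [(P 4 0 L),(P 4 0 L),(P 0 0 L),L,(P 0 0 L),(P 0 0 L),(P 0 0 L)])),(P 3 2 (R [(P 4 0 L),(P 4 0 L),(P 0 0 L),L,L,(P 0 0 L),(P 0 0 L)])),(P 3 3 (R [(P 2 0 L),(P 2 0 L),(P 0 0 L),(P 0 0 L),(P 0 0 L),L,(P 0 0 L),(P 0 0 L)])),(P 1 0 (R [(P 3 1 L),(P 4 0 (R [(P 4 2 L),L,L,(P 4 3 L),(P 4 2 L)])),(P 2 0 L),(P 2 0 L),(P 3 1 L),(P 2 0 (R [L,L,(P 4 2 L),(P 4 3 L),(P 4 2 L)])),(P 3 0 L),(P 3 0 L)])),(P 3 2 (R [(P 2 0 L),(P 2 0 L),(P 0 0 L),(P 0 0 L),(P 0 0 L),L,(P 0 0 L),(P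 0 0 L)])),(P 1 0 (R [(P 3 2 L),(P 3 3 L),(P 3 1 L),(P 3 1 L),(P 2 2 L),(P 3 3 L),(P 3 1 L),(P 3 1 L)])),(P 3 2 (R [(P 2 0 L),(P 2 0 L),(P 0 0 L),(P 0 0 L),(P 0 0 L),(P 0 0 L),(P 0 0 L),(P 0 0 L)])),(P 1 0 (R [(P 3 3 L),(P 3 3 L),(P 3 0 L),(P 3 0 L),(P 3 3 L),(P 2 3 L),(P 2 0 L),(P 3 0 L)])),(P 3 1 (R [(P 2 0 L),(P 2 0 L),(P 0 0 L),(P 0 0 L),(P 0 0 L),(P 0 0 L),(P 0 0 L),(P 0 0 L)])),(P 1 0 (R [(P 3 1 L),(P 3 2 L),(P 3 0 L),(P 3 0 L),(P 3 1 L),(P 3 2 L),(P 3 0 L),(P 2 0 L)]))]))"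
lemma ck4: "check True (delc (delc B55 (0,4)) (Suc 0,4)) k4" by code_simp

definition k5 :: cert where "k5 = (P 1 1 (R [(P 3 1 (R [(P 2 3 L),(P 3 3 L),(P 4 0 L),(P 4 0 L),(P 2 3 L),(P 2 3 L),(P 2 3 L)])),(P 3 1 (R [(P 2 3 L),L,(P 0 2 L),(P 0 2 L),(P 0 2 L),(P 0 2 L),(P 0 2 L)])),(P 3 1 L),(P 3 1 (R [(P 3 3 L),L,(P 0 2 L),(P 0 2 L),(P 0 2 L),(P 0 2 L)])),(P 3 2 (R [(P 4 0 L),(P 4 0 (R [L,L,L,L])),(P 4 0 L),(P 4 0 L),(P 0 2 L),(P 1 3 L),(P 1 3 L)])),(P 1 3 (R [(P 2 3 L),(P 3 0 L),(P 3 0 L),(P 3 3 L),(P 3 3 L),(P 3 0 L),(P 3 0 L)])),(P 3 1 (R [(P 4 0 L),(P 0 2 L),(P 0 2 L),L,(P 0 2 L),(P 0 2 L)])),(P 3 1 (R [(P 4 0 L),(P 0 2 L),L,L,(P 0 2 L),(P 0 2 L)])),(P 3 1 (R [(P 2 3 L),(P 0 2 L),L,(P 0 2 L),(P 0 2 L),(P 0 2 L),(P 0 2 L),(P 0 2 L)])),(P 3 2 (R [(P 2 3 L),(P 0 2 L),L,(P 0 2 L),(P 0 2 L),(P 0 2 L),(P 0 2 L)])),(P 1 3 (R [(P 3 3 L),(P 3 0 L),(P 3 0 L),(P 3 3 L),(P 2 3 L),(P 3 0 L),(P 3 0 L)])),(P 3 1 (R [(P 2 3 L),(P 0 2 L),L,(P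 0 2 L),(P 0 2 L),(P 0 2 L),(P 0 2 L)])),(P 3 1 (R [(P 2 3 L),(P 0 2 L),L,(P 0 2 L),(P 0 2 L),(P 0 2 L),(P 0 2 L)]))]))"
lemma ck5: "check True (delc (delc B55 (1,0)) (Suc 1,0)) k5" by code_simp

definition k6 :: cert where "k6 = (P 1 2 (R [(P 3 2 (R [(P 3 0 L),L,(P 0 3 L),(P 0 3 L),(P 0 3 L),(P 0 3 L),(P 0 3 L)])),(P 3 2 (R [(P 3 0 L),L,(P 0 0 L),(P 0 0 L),(P 0 0 L),(P 0 0 L),(P 0 0 L)])),(P 3 2 L),(P 3 2 L),(P 3 2 (R [(P 0 3 L),(P 0 0 L),L,(P 0 0 L),(P 0 0 L),(P 0 0 L)])),(P 3 3 (R [(P 3 0 L),(P 0 0 L),(P 2 3 L),(P 3 0 L),(P 0 0 L),(P 4 1 (R [L,L,L,L])),(P 2 3 (R [(P 0 3 L),(P 0 0 L),L,(P 0 0 L),(P 0 0 L)]))])),(P 3 0 (R [(P 0 3 (R [(P 4 2 L),L,L,(P 4 3 L),(P 4 2 L)])),(P 0 0 (R [(P 4 2 L),L,L,(P 4 3 L),(P 4 2 L)])),(P 4 2 L),(P 4 2 L),(P 0 0 L),(P 0 0 L),(P 4 3 (R [(P 0 3 L),(P 0 0 L),L,L,(P 0 0 L)])),(P 4 2 (R [(P 0 3 L),(P 0 0 L),L,L,(P 0 0 L)]))])),(P 3 2 (R [(P 0 3 L),(P 0 0 L),L,(P 0 0 L),(P 0 0 L),(P 0 0 L)])),(P 3 2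 (R [(P 0 3 L),(P 0 0 L),L,L,(P 0 0 L),(P 0 0 L),(P 0 0 L)])),(P 3 2 (R [(P 0 3 L),(P 0 0 L),L,L,(P 0 0 L),(P 0 0 L),(P 0 0 L),(P 0 0 L)])),(P 3 3 (R [(P 0 3 L),(P 0 0 L),L,L,(P 0 0 L),(P 0 0 L),(P 0 0 L)])),(P 3 1 (R [(P 0 3 L),(P 0 0 L),L,L,(P 0 0 L),(P 0 0 L),(P 0 0 L),(P 0 0 L)])),(P 3 2 (R [(P 0 3 L),(P 0 0 L),L,L,(P 0 0 L),(P 0 0 L),(P 0 0 L)]))]))"
lemma ck6: "check True (delc (delc B55 (1,1)) (Suc 1,1)) k6" by code_simp

definition k7 :: cert where "k7 = (P 1 0 (R [(P 3 0 (R [(P 2 3 L),(P 3 2 L),(P 4 1 L),(P 3 2 L),(P 2 3 L),(P 2 3 L),(P 2 3 L)])),(P 3 0 (R [(P 2 3 L),L,(P 0 2 L),(P 0 2 L),(P 0 2 L),(P 0 2 L),(P 0 2 L)])),(P 3 0 L),(P 3 0 (R [(P 3 2 L),L,(P 0 2 L),(P 0 2 L),(P 0 2 L),(P 0 2 L)])),(P 1 3 (R [(P 2 3 L),(P 3 1 L),(P 3 1 L),(P 3 2 L),(P 3 3 L),(P 3 1 L),(P 3 1 L)])),(P 1 3 (R [(P 2 3 L),(P 4 1 (R [L,L,L,L])),(P 3 2 L),(P 3 2 L),(P 3 3 L),(P 4 1 (R [L,L,L,L])),(P 3 2 L)])),(P 3 0 (R [(P 4 1 L),(P 0 2 L),(P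 0 2 L),L,(P 0 2 L),(P 0 2 L)])),(P 3 0 (R [(P 3 2 L),(P 0 2 L),L,L,(P 0 2 L),(P 0 2 L)])),(P 1 3 (R [(P 3 2 L),(P 3 1 L),(P 3 1 L),(P 2 3 L),(P 3 3 L),(P 3 1 L),(P 3 1 L)])),(P 3 3 (R [(P 4 2 (R [L,(P 2 0 L),(P 2 3 L),L])),(P 4 2 (R [L,L,(P 0 2 L),L])),(P 2 0 L),(P 4 2 (R [(P 2 0 L),L,(P 0 2 L),L])),(P 1 3 L),(P 0 2 L),(P 1 3 L)])),(P 3 0 (R [(P 2 3 L),(P 0 2 L),L,(P 0 2 L),(P 0 2 L),(P 0 2 L),(P 0 2 L),(P 0 2 L)])),(P 3 0 (R [(P 2 3 L),(P 0 2 L),L,(P 0 2 L),(P 0 2 L),(P 0 2 L),(P 0 2 L)])),(P 3 0 (R [(P 2 3 L),(P 0 2 L),L,(P 0 2 L),(P 0 2 L),(P 0 2 L),(P 0 2 L)]))]))"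
lemma ck7: "check True (delc (delc B55 (1,2)) (Suc 1,2)) k7" by code_simp

definition k8 :: cert where "k8 = (P 1 1 (R [(P 3 0 (R [(P 3 2 L),L,(P 0 3 L),(P 0 3 L),(P 0 3 L),(P 0 3 L),(P 0 3 L)])),(P 3 1 (R [(P 3 3 L),L,(P 0 0 L),(P 0 0 L),(P 0 0 L),(P 0 0 L),(P 0 0 L)])),(P 3 1 L),(P 3 1 L),(P 3 1 (R [(P 0 3 L),(P 0 0 L),L,(P 0 0 L),(P 0 0 L),(P 0 0 L)])),(P 3 2 (R [(P 0 3 (R [(P 4 0 L),L,L,(P 4 3 L),(P 4 0 L)])),(P 0 0 (R [(P 4 0 L),L,L,(P 4 3 L),(P 4 0 L)])),(P 4 0 L),(P 4 0 L),(P 0 0 L),(P 0 0 L),(P 4 3 (R [(P 0 3 L),(P 0 0 L),L,L,(P 0 0 L)])),(P 4 0 (R [(P 0 3 L),(P 0 0 L),L,L,(P 0 0 L)]))])),(P 3 0 (R [(P 0 3 L),(P 3 3 L),(P 3 3 L),(P 2 0 L),(P 0 3 L),(P 2 0 (R [(P 0 3 L),(P 0 0 L),L,(P 0 0 L),(P 0 0 L)])),(P 4 2 (R [L,L,L,L]))])),(P 3 1 (R [(P 0 3 L),(P 0 0 L),L,(P 0 0 L),(P 0 0 L),(P 0 0 L)])),(P 3 1 (R [(P 0 3 L),(P 0 0 L),L,L,(P 0 0 L),(P 0 0 L),(P 0 0 L)])),(P 3 2 (R [(P 0 3 L),(P 0 0 L),L,L,(P 0 0 L),(P 0 0 L),(P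 0 0 L),(P 0 0 L)])),(P 3 0 (R [(P 0 3 L),(P 0 0 L),L,L,(P 0 0 L),(P 0 0 L),(P 0 0 L)])),(P 3 1 (R [(P 0 3 L),(P 0 0 L),L,L,(P 0 0 L),(P 0 0 L),(P 0 0 L),(P 0 0 L)])),(P 3 1 (R [(P 0 3 L),(P 0 0 L),L,L,(P 0 0 L),(P 0 0 L),(P 0 0 L)]))]))"
lemma ck8: "check True (delc (delc B55 (1,3)) (Suc 1,3)) k8" by code_simp

definition k9 :: cert where "k9 = (P 1 2 (R [(P 3 2 (R [(P 2 0 L),L,(P 0 1 L),(P 0 1 L),(P 0 1 L),(P 0 1 L),(P 0 1 L)])),(P 3 2 (R [(P 2 0 L),(P 3 0 L),(P 4 0 L),(P 4 0 L),(P 2 0 L),(P 2 0 L),(P 2 0 L)])),(P 3 2 (R [(P 3 0 L),L,(P 0 0 L),(P 0 0 L),(P 0 0 L),(P 0 0 L)])),(P 3 2 L),(P 3 2 (R [(P 0 1 L),(P 4 0 L),L,L,(P 0 0 L),(P 0 0 L)])),(P 3 2 (R [(P 0 1 L),(P 4 0 L),(P 0 0 L),L,(P 0 0 L),(P 0 0 L)])),(P 1 0 (R [(P 3 3 L),(P 3 3 L),(P 2 0 L),(P 3 3 L),(P 3 3 L),(P 3 0 L),(P 3 0 L)])),(P 3 1 (R [(P 4 3 (R [L,L,L,L])),(P 4 0 L),(P 4 0 L),(P 4 0 L),(P 0 0 L),(P 1 0 L),(P 1 0 L)])),(P 3 2 (R [(P 0 1 L),(P 2 0 L),(P 0 0 L),L,(P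 0 0 L),(P 0 0 L),(P 0 0 L)])),(P 3 2 (R [(P 0 1 L),(P 2 0 L),(P 0 0 L),L,(P 0 0 L),(P 0 0 L),(P 0 0 L)])),(P 1 0 (R [(P 3 3 L),(P 3 3 L),(P 3 0 L),(P 3 3 L),(P 3 3 L),(P 2 0 L),(P 3 0 L)])),(P 3 1 (R [(P 0 1 L),(P 2 0 L),(P 0 0 L),L,(P 0 0 L),(P 0 0 L),(P 0 0 L)])),(P 3 2 (R [(P 0 1 L),(P 2 0 L),(P 0 0 L),L,(P 0 0 L),(P 0 0 L),(P 0 0 L),(P 0 0 L)]))]))"
lemma ck9: "check True (delc (delc B55 (1,4)) (Suc 1,4)) k9" by code_simp

definition k10 :: cert where "k10 = (P 3 1 (R [(P 1 1 (R [(P 2 3 L),(P 2 3 L),(P 0 3 L),(P 0 3 L),L,(P 0 3 L),(P 0 3 L),(P 0 3 L)])),(P 1 2 (R [(P 2 3 L),(P 2 3 L),(P 3 3 L),L,(P 0 3 L),(P 2 3 L),(P 2 3 L)])),(P 1 3 (R [(P 3 3 L),(P 2 3 L),(P 3 3 L),(P 0 0 L),(P 0 0 L),(P 0 0 L),(P 0 0 L)])),(P 1 1 (R [(P 2 3 L),(P 2 3 L),(P 0 0 L),L,(P 0 0 L),(P 0 0 L),(P 2 3 L)])),(P 1 1 (R [(P 2 3 L),(P 2 3 L),(P 0 0 L),L,(P 0 0 L),(P 2 3 L),(P 0 0 L)])),(P 1 2 (R [(P 3 3 L),(P 3 3 L),(P 0 0 L),(P 0 0 L),(P 0 0 L),(P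 0 0 L),(P 0 0 (R [L,L,L,L]))])),(P 1 3 (R [(P 3 3 L),(P 3 3 L),(P 2 3 L),(P 0 0 L),(P 0 0 L),(P 0 0 L),(P 0 0 L)])),(P 1 1 (R [(P 0 3 L),(P 0 0 L),L,(P 0 0 L),(P 0 0 L),(P 0 0 L)])),(P 1 1 (R [(P 0 3 L),(P 0 0 L),L,L,(P 0 0 L),(P 0 0 L)])),(P 1 1 L),(P 1 1 (R [(P 0 3 L),(P 0 0 L),(P 0 0 L),(P 0 0 L),L,(P 0 0 L)])),(P 1 1 (R [(P 0 3 L),(P 0 0 L),(P 2 3 L),(P 0 0 L),(P 0 0 L),(P 0 0 L),(P 0 3 L)])),(P 1 1 (R [(P 0 3 L),(P 2 3 L),(P 0 0 L),(P 0 0 L),(P 0 0 L),L,(P 0 3 L)]))]))"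
lemma ck10: "check True (delc (delc B55 (2,0)) (Suc 2,0)) k10" by code_simp

definition k11 :: cert where "k11 = (P 3 2 (R [(P 1 2 (R [(P 4 0 L),(P 4 0 L),(P 0 1 L),L,L,(P 0 1 L),(P 4 0 L)])),(P 1 2 (R [(P 4 0 L),(P 4 0 L),(P 4 0 L),(P 4 0 L),L,L,(P 4 3 L),(P 4 0 L)])),(P 1 3 (R [(P 4 0 L),(P 4 0 L),(P 0 0 L),L,L,(P 0 0 L),(P 0 0 L)])),(P 1 1 (R [(P 4 0 L),(P 4 0 L),(P 4 0 L),(P 4 0 L),L,L,(P 4 3 L),(P 4 0 L)])),(P 1 2 (R [(P 4 0 L),(P 4 0 L),(P 0 0 L),L,L,(P 0 0 L),(P 0 0 L)])),(P 1 2 (R [(P 4 0 L),(P 0 0 L),(P 0 0 L),L,(P 0 0 L),(P 0 0 L)])),(P 1 3 (R [(P 0 1 (R [L,L,L,L])),(P 2 3 (R [(P 4 0 L),(P 4 0 L),L,(P 4 3 L),(P 4 0 L)])),(P 0 0 L),(P 0 0 L),(P 0 0 L),(P 0 0 L),(P 0 0 L)])),(P 1 0 (R [(P 0 3 (R [(P 4 0 L),L,L,(P 4 3 L),(P 4 0 L)])),(P 0 2 (R [(P 4 0 L),L,L,(P 4 3 L),(P 4 0 L)])),(P 4 0 L),(P 4 0 L),(P 0 2 L),(P 0 2 L),(P 4 3 (R [(P 0 3 L),(P 0 2 L),L,L,(P 0 2 L)])),(P 4 0 (R [(P 0 3 L),(P 0 2 L),L,L,(P 0 2 L)]))])),(P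 1 2 (R [(P 0 1 L),(P 4 0 L),(P 0 0 L),L,(P 0 0 L),(P 0 0 L)])),(P 1 2 L),(P 1 2 L),(P 1 2 (R [(P 0 1 L),(P 4 3 L),(P 0 0 L),(P 0 0 L),(P 0 0 L),L,(P 0 0 L)])),(P 1 2 (R [(P 4 0 L),(P 4 0 L),(P 0 0 L),(P 0 0 L),(P 0 0 L),L,(P 0 0 L)]))]))"
lemma ck11: "check True (delc (delc B55 (2,1)) (Suc 2,1)) k11" by code_simp

definition k12 :: cert where "k12 = (P 3 0 (R [(P 1 3 (R [(P 2 3 L),(P 3 3 L),(P 3 3 L),(P 0 1 L),(P 0 1 L),(P 0 1 L),(P 0 1 L)])),(P 1 3 (R [(P 2 3 L),(P 3 3 L),(P 3 3 L),(P 2 0 L),(P 0 2 (R [L,(P 4 2 L),L,(P 2 0 L)])),(P 0 2 (R [L,(P 2 3 L),(P 2 0 L),L])),(P 0 2 (R [L,(P 2 3 L),L,L]))])),(P 1 0 (R [(P 2 3 L),(P 2 3 L),(P 0 3 L),(P 0 3 L),L,(P 0 3 L),(P 0 3 L),(P 0 3 L)])),(P 1 0 (R [(P 2 3 L),(P 2 3 L),(P 0 1 L),L,(P 0 1 L),(P 0 1 L),(P 2 3 L)])),(P 1 0 (R [(P 2 3 L),(P 2 3 L),(P 0 1 L),L,(P 0 1 L),(P 0 2 L),(P 0 1 L)])),(P 1 3 (R [(P 3 3 L),(P 3 3 L),(P 2 3 L),(P 0 0 L),(P 0 1 L),(P 0 1 L),(P 0 1 L)])),(P 3 3 (R [(P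 0 2 L),(P 1 3 L),(P 0 1 (R [L,L,L,L])),(P 0 2 L),(P 0 2 L),(P 0 1 (R [L,L,L,L])),(P 0 2 L)])),(P 1 0 (R [(P 0 3 L),(P 0 1 L),L,(P 0 1 L),(P 0 1 L),(P 0 1 L)])),(P 1 0 (R [(P 0 3 L),(P 0 1 L),L,L,(P 0 1 L),(P 0 1 L)])),(P 1 0 L),(P 1 0 (R [(P 0 3 L),(P 0 1 L),(P 0 1 L),(P 0 1 L),L,(P 0 1 L)])),(P 1 0 (R [(P 0 3 L),(P 0 1 L),(P 0 2 L),(P 0 1 L),(P 0 1 L),(P 0 1 L),(P 0 2 L)])),(P 1 0 (R [(P 0 3 L),(P 2 3 L),(P 0 1 L),(P 0 1 L),(P 0 1 L),L,(P 0 2 L)]))]))"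
lemma ck12: "check True (delc (delc B55 (2,2)) (Suc 2,2)) k12" by code_simp

definition k13 :: cert where "k13 = (P 3 1 (R [(P 1 1 (R [(P 4 0 L),(P 4 0 L),(P 0 2 L),L,L,(P 0 2 L),(P 0 3 L)])),(P 1 2 (R [(P 4 0 L),(P 4 0 L),(P 4 0 L),(P 4 0 L),L,L,(P 4 3 L),(P 4 0 L)])),(P 1 0 (R [(P 4 0 L),(P 4 0 L),(P 0 3 L),L,L,(P 0 3 L),(P 0 3 L)])),(P 1 1 (R [(P 4 0 L),(P 4 0 L),(P 4 0 L),(P 4 0 L),L,L,(P 4 3 L),(P 4 0 L)])),(P 1 1 (R [(P 4 0 L),(P 4 0 L),(P 0 2 L),L,L,(P 4 3 L),(P 0 2 L)])),(P 1 1 (R [(P 4 0 L),(P 0 2 L),(P 0 2 L),L,(P 0 2 L),(P 0 2 L)])),(P 1 2 (R [(P 0 3 (R [(P 4 0 L),L,L,(P 4 3 L),(P 4 0 L)])),(P 0 0 (R [(P 4 0 L),L,L,(P 4 3 L),(P 4 0 L)])),(P 4 0 L),(P 4 0 L),(P 0 0 L),(P 0 0 L),(P 4 3 (R [(P 0 3 L),(P 0 0 L),L,L,(P 0 0 L)])),(P 4 0 (R [(P 0 3 L),(P 0 0 L),L,L,(P 0 0 L)]))])),(P 1 0 (R [(P 2 0 (R [(P 4 0 L),(P 4 0 L),L,(P 4 3 L),(P 4 0 L)])),(P 0 2 (R [L,L,L,L])),(P 0 2 L),(P 0 2 L),(P 0 2 L),(P 0 2 L),(P 0 3 L)])),(P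 1 1 (R [(P 0 2 L),(P 4 0 L),(P 0 2 L),L,(P 0 2 L),(P 0 2 L)])),(P 1 1 L),(P 1 1 L),(P 1 0 (R [(P 0 3 L),(P 4 3 L),(P 0 2 L),(P 0 2 L),(P 0 2 L),L,(P 0 2 L)])),(P 1 1 (R [(P 0 3 L),(P 4 0 L),(P 0 2 L),(P 0 2 L),(P 0 2 L),L,(P 0 3 L)]))]))"
lemma ck13: "check True (delc (delc B55 (2,3)) (Suc 2,3)) k13" by code_simp

definition k14 :: cert where "k14 = (P 3 2 (R [(P 1 2 (R [(P 2 0 L),(P 2 0 L),(P 0 3 L),(P 0 3 L),L,(P 0 3 L),(P 2 0 L)])),(P 1 2 (R [(P 2 0 L),(P 2 0 L),(P 0 3 L),(P 0 3 L),L,(P 2 0 L),(P 0 3 L)])),(P 1 0 (R [(P 2 0 L),(P 3 0 L),(P 3 0 L),(P 0 3 L),(P 0 3 L),(P 0 3 L),(P 0 3 L)])),(P 1 1 (R [(P 2 0 L),(P 2 0 L),(P 3 0 L),(P 0 0 L),L,(P 2 0 L),(P 2 0 L)])),(P 1 2 (R [(P 2 0 L),(P 2 0 L),(P 0 0 L),(P 0 0 L),(P 0 0 L),L,(P 0 0 L),(P 0 0 L)])),(P 1 2 (R [(P 0 3 L),(P 0 0 L),L,L,(P 0 0 L),(P 0 0 L)])),(P 1 2 (R [(P 0 3 L),(P 0 0 L),L,(P 0 0 L),(P 0 0 L),(P 0 0 L)])),(P 1 0 (R [(P 3 0 L),(P 3 0 L),(P 2 0 L),(P 0 3 L),(P 0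 2 L),(P 0 3 L),(P 0 3 L)])),(P 1 1 (R [(P 3 0 L),(P 3 0 L),(P 0 3 L),(P 0 0 L),(P 0 0 L),(P 0 3 (R [L,L,L,L])),(P 0 0 L)])),(P 1 2 (R [(P 0 3 L),(P 0 3 L),(P 0 0 L),(P 0 0 L),L,(P 0 0 L)])),(P 1 2 L),(P 1 2 (R [(P 0 3 L),(P 2 0 L),(P 0 0 L),(P 0 0 L),(P 0 0 L),L,(P 0 0 L)])),(P 1 2 (R [(P 2 0 L),(P 0 3 L),(P 0 0 L),(P 0 0 L),(P 0 0 L),(P 0 0 L),(P 0 0 L)]))]))"
lemma ck14: "check True (delc (delc B55 (2,4)) (Suc 2,4)) k14" by code_simp

definition k15 :: cert where "k15 = (P 3 1 (R [(P 1 1 (R [(P 2 2 L),(P 2 2 L),(P 0 3 L),(P 0 3 L),(P 0 2 L),(P 0 3 L),(P 0 3 L),(P 0 3 L)])),(P 1 2 (R [(P 2 2 L),(P 2 3 L),(P 2 3 L),(P 3 3 L),(P 4 3 L),(P 4 3 L),(P 2 0 L),(P 2 3 L)])),(P 1 0 (R [(P 2 2 L),(P 2 2 L),(P 0 3 L),(P 0 3 L),(P 0 3 L),(P 0 3 L),(P 0 3 L),(P 0 3 L)])),(P 1 0 (R [(P 2 2 L),(P 2 2 L),(P 2 3 L),(P 2 2 L),(P 4 3 L),(P 2 2 L),(P 2 2 L),(P 2 2 L)])),(P 1 0 (R [(P 2 2 L),(P 2 2 L),(P 0 2 L),(P 0 2 L),(P 0 2 L),(P 0 2 L),(P 0 2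 L),(P 0 2 L)])),(P 1 1 (R [(P 2 3 L),(P 0 2 L),L,(P 0 2 L),(P 0 2 L),(P 0 2 L),(P 0 2 L),(P 0 2 L)])),(P 3 3 (R [(P 1 2 L),(P 1 3 L),(P 0 0 (R [L,L,(P 2 2 L),(P 2 3 L),(P 2 2 L)])),(P 1 2 L),(P 0 2 L),(P 0 3 L),(P 0 0 (R [(P 0 3 L),(P 0 2 L),(P 0 2 L),L,L])),(P 1 2 L)])),(P 1 0 (R [(P 2 3 L),(P 0 2 L),L,(P 0 2 L),(P 0 2 L),(P 0 2 L),(P 0 2 L),(P 0 2 L)])),(P 1 0 (R [(P 0 3 L),(P 0 2 L),L,L,(P 0 2 L),(P 0 2 L),(P 0 2 L)])),(P 1 0 (R [(P 0 3 L),(P 2 2 L),(P 0 2 L),L,(P 0 2 L),(P 0 2 L),(P 0 2 L)])),(P 1 0 (R [(P 0 3 L),(P 4 3 L),(P 0 2 L),(P 0 2 L),(P 0 2 L),L,(P 0 2 L)])),(P 1 0 (R [(P 0 3 L),(P 2 2 L),(P 0 2 L),(P 0 2 L),(P 0 2 L),L,(P 0 2 L)])),(P 1 0 (R [(P 0 3 L),(P 2 2 L),(P 0 2 L),(P 0 2 L),(P 0 2 L),(P 0 2 L),(P 0 2 L),(P 0 2 L)])),(P 1 0 (R [(P 0 3 L),(P 2 2 L),(P 0 2 L),(P 0 2 L),(P 0 2 L),(P 0 2 L),(P 0 2 L),(P 0 2 L)]))]))"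
lemma ck15: "check True (delc (delc B55 (3,0)) (Suc 3,0)) k15" by code_simp

definition k16 :: cert where "k16 = (P 3 2 (R [(P 1 1 (R [(P 2 0 L),(P 2 3 L),(P 0 3 L),(P 0 3 L),(P 0 3 L),(P 0 3 L),(P 0 3 L),(P 0 3 L)])),(P 1 2 (R [(P 2 0 L),(P 2 0 L),(P 2 3 L),(P 2 0 L),(P 2 3 L),(P 0 3 L),(P 2 0 L),(P 2 0 L)])),(P 1 0 (R [(P 2 0 L),(P 2 3 L),(P 0 3 L),(P 0 3 L),(P 0 3 L),(P 0 3 L),(P 0 3 L),(P 0 3 L)])),(P 1 1 (R [(P 2 0 L),(P 2 0 L),(P 2 3 L),(P 2 0 L),(P 0 0 L),(P 2 0 L),(P 2 0 L),(P 2 0 L)])),(P 1 2 (R [(P 2 0 L),(P 2 0 L),(P 0 0 L),(P 0 0 L),(P 0 0 L),(P 0 0 L),(P 0 0 L),(P 0 0 L)])),(P 1 1 (R [(P 2 3 L),(P 0 2 L),L,(P 0 2 L),(P 0 2 L),(P 0 2 L),(P 0 2 L)])),(P 1 2 (R [(P 0 3 L),(P 0 0 L),L,L,(P 0 0 L),(P 0 0 L),(P 0 0 L),(P 0 0 L)])),(P 1 0 (R [(P 2 3 (R [(P 2 0 L),(P 4 3 L),L,(P 2 0 L)])),(P 2 3 (R [(P 2 0 L),(P 0 2 L),L,(P 0 2 L)])),(P 2 0 L),(P 4 3 (R [(P 2 0 L),L,(P 0 2 L),L])),(P 1 3 L),(P 0 3 L),(P 0 2 L),(P 1 3 L)])),(P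 1 1 (R [(P 0 3 L),(P 0 0 L),L,L,(P 0 0 L),(P 0 0 L),(P 0 0 L),(P 0 0 L)])),(P 1 1 (R [(P 0 3 L),(P 2 0 L),(P 0 2 L),L,(P 0 0 L),(P 0 3 L),(P 0 3 L)])),(P 1 1 (R [(P 0 3 L),(P 0 0 L),(P 2 3 L),(P 0 0 L),(P 0 0 L),(P 0 0 L),(P 0 3 L)])),(P 1 2 (R [(P 2 0 L),(P 0 3 L),(P 0 0 L),(P 0 0 L),(P 0 0 L),(P 0 0 L),(P 0 0 L)])),(P 1 0 (R [(P 0 3 L),(P 2 2 L),(P 0 2 L),(P 0 2 L),(P 0 2 L),(P 0 2 L),(P 0 2 L),(P 0 2 L)])),(P 1 1 (R [(P 0 3 L),(P 2 0 L),(P 2 3 L),(P 0 2 L),(P 0 0 L),(P 0 3 L),(P 0 3 L),(P 0 3 L)]))]))"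
lemma ck16: "check True (delc (delc B55 (3,1)) (Suc 3,1)) k16" by code_simp

definition k17 :: cert where "k17 = (P 3 0 (R [(P 1 1 (R [(P 2 2 L),(P 2 2 L),(P 0 3 L),(P 0 3 L),(P 0 2 L),(P 0 3 L),(P 0 3 L),(P 0 3 L)])),(P 1 2 (R [(P 2 2 L),(P 2 3 L),(P 2 3 L),(P 3 3 L),(P 4 3 L),(P 4 3 L),(P 2 0 L),(P 2 3 L)])),(P 1 0 (R [(P 2 2 L),(P 2 2 L),(P 0 3 L),(P 0 3 L),(P 0 3 L),(P 0 3 L),(P 0 3 L),(P 0 3 L)])),(P 1 0 (R [(P 2 2 L),(P 2 2 L),(P 2 3 L),(P 2 2 L),(P 4 3 L),(P 2 2 L),(P 2 2 L),(P 2 2 L)])),(P 1 0 (R [(P 2 2 L),(P 2 2 L),(P 0 2 L),(P 0 2 L),(P 0 2 L),(P 0 2 L),(P 0 2 L),(P 0 2 L)])),(P 1 1 (R [(P 2 3 L),(P 0 2 L),L,(P 0 2 L),(P 0 2 L),(P 0 2 L),(P 0 2 L),(P 0 2 L)])),(P 3 3 (R [(P 1 2 L),(P 1 3 L),(P 0 0 (R [L,L,(P 2 2 L),(P 2 3 L),(P 2 2 L)])),(P 1 2 L),(P 0 2 L),(P 0 3 L),(P 0 0 (R [(P 0 3 L),(P 0 2 L),(P 0 2 L),L,L])),(P 1 2 L)])),(P 1 0 (R [(P 2 3 L),(P 0 2 L),L,(P 0 2 L),(P 0 2 L),(P 0 2 L),(P 0 2 L),(P 0 2 L)])),(P 1 0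 (R [(P 0 3 L),(P 0 2 L),L,L,(P 0 2 L),(P 0 2 L),(P 0 2 L)])),(P 1 0 (R [(P 0 3 L),(P 2 2 L),(P 0 2 L),L,(P 0 2 L),(P 0 2 L),(P 0 2 L)])),(P 1 0 (R [(P 0 3 L),(P 4 3 L),(P 0 2 L),(P 0 2 L),(P 0 2 L),L,(P 0 2 L)])),(P 1 0 (R [(P 0 3 L),(P 2 2 L),(P 0 2 L),(P 0 2 L),(P 0 2 L),L,(P 0 2 L)])),(P 1 0 (R [(P 0 3 L),(P 2 2 L),(P 0 2 L),(P 0 2 L),(P 0 2 L),(P 0 2 L),(P 0 2 L),(P 0 2 L)])),(P 1 0 (R [(P 0 3 L),(P 2 2 L),(P 0 2 L),(P 0 2 L),(P 0 2 L),(P 0 2 L),(P 0 2 L),(P 0 2 L)]))]))"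
lemma ck17: "check True (delc (delc B55 (3,2)) (Suc 3,2)) k17" by code_simp

definition k18 :: cert where "k18 = (P 3 1 (R [(P 1 1 (R [(P 2 0 L),(P 2 3 L),(P 0 3 L),(P 0 3 L),(P 0 3 L),(P 0 3 L),(P 0 3 L),(P 0 3 L)])),(P 1 2 (R [(P 2 0 L),(P 2 0 L),(P 2 3 L),(P 2 0 L),(P 2 3 L),(P 0 3 L),(P 2 0 L),(P 2 0 L)])),(P 1 0 (R [(P 2 0 L),(P 2 3 L),(P 0 3 L),(P 0 3 L),(P 0 3 L),(P 0 3 L),(P 0 3 L),(P 0 3 L)])),(P 1 1 (R [(P 2 0 L),(P 2 0 L),(P 2 3 L),(P 2 0 L),(P 0 0 L),(P 2 0 L),(P 2 0 L),(P 2 0 L)])),(P 1 2 (R [(P 2 0 L),(P 2 0 L),(P 0 0 L),(P 0 0 L),(P 0 0 L),(P 0 0 L),(P 0 0 L),(P 0 0 L)])),(P 1 1 (R [(P 2 3 L),(P 0 2 L),L,(P 0 2 L),(P 0 2 L),(P 0 2 L),(P 0 2 L)])),(P 1 2 (R [(P 0 3 L),(P 0 0 L),L,L,(P 0 0 L),(P 0 0 L),(P 0 0 L),(P 0 0 L)])),(P 1 3 (R [(P 2 0 (R [(P 2 3 L),(P 0 1 L),(P 0 1 L),L])),(P 2 0 (R [(P 2 3 L),(P 4 0 L),(P 2 3 L),L])),(P 4 0 (R [(P 2 3 L),L,(P 0 0 L),L])),(P 2 3 L),(P 0 0 L),(P 1 0 L),(P 1 0 L),(P 0 0 L)])),(P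 1 1 (R [(P 0 3 L),(P 0 0 L),L,L,(P 0 0 L),(P 0 0 L),(P 0 0 L),(P 0 0 L)])),(P 1 1 (R [(P 0 3 L),(P 2 0 L),(P 0 2 L),L,(P 0 0 L),(P 0 3 L),(P 0 3 L)])),(P 1 1 (R [(P 0 3 L),(P 0 0 L),(P 2 3 L),(P 0 0 L),(P 0 0 L),(P 0 0 L),(P 0 3 L)])),(P 1 2 (R [(P 2 0 L),(P 0 3 L),(P 0 0 L),(P 0 0 L),(P 0 0 L),(P 0 0 L),(P 0 0 L)])),(P 1 0 (R [(P 0 3 L),(P 2 2 L),(P 0 2 L),(P 0 2 L),(P 0 2 L),(P 0 2 L),(P 0 2 L),(P 0 2 L)])),(P 1 1 (R [(P 0 3 L),(P 2 0 L),(P 2 3 L),(P 0 2 L),(P 0 0 L),(P 0 3 L),(P 0 3 L),(P 0 3 L)]))]))"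
lemma ck18: "check True (delc (delc B55 (3,3)) (Suc 3,3)) k18" by code_simp

definition k19 :: cert where "k19 = (P 3 2 (R [(P 1 1 (R [(P 2 0 L),(P 3 0 L),(P 3 0 L),(P 3 0 L),(P 1 3 L),(P 1 3 L),(P 1 3 L),(P 0 3 L)])),(P 1 2 (R [(P 2 0 L),(P 2 0 L),(P 3 0 L),(P 2 0 L),(P 4 0 L),(P 4 0 L),(P 2 0 L),(P 2 0 L)])),(P 1 0 (R [(P 2 0 L),(P 3 0 L),(P 3 0 L),(P 3 0 L),(P 1 3 L),(P 1 3 L),(P 1 3 L),(P 0 3 L)])),(P 1 1 (R [(P 2 0 L),(P 2 0 L),(P 3 0 L),(P 2 0 L),(P 4 0 L),(P 4 0 L),(P 2 0 L),(P 2 0 L)])),(P 1 0 (R [(P 3 0 L),(P 2 0 L),(P 3 0 L),(P 3 0 L),(P 1 2 L),(P 1 2 L),(P 1 2 L),(P 1 2 L)])),(P 1 2 (R [(P 3 0 L),(P 0 0 L),L,(P 0 0 L),(P 0 0 L),(P 0 0 L),(P 0 0 L)])),(P 1 2 (R [(P 0 3 L),(P 0 0 L),L,L,(P 0 0 L),(P 0 0 L),(P 0 0 L)])),(P 1 3 (R [(P 0 1 L),(P 2 0 L),(P 0 0 L),L,(P 0 0 L),(P 0 0 L),(P 0 0 L),(P 0 0 L)])),(P 3 0 (R [(P 1 1 L),(P 0 3 (R [L,L,(P 2 1 L),(P 2 0 L),(P 2 0 L)])),(P 1 0 L),(P 1 0 L),(P 1 1 L),(P 0 0 (R [(P 0 3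 L),(P 0 2 L),(P 0 2 L),L,L])),(P 0 0 L),(P 0 0 L)])),(P 1 2 (R [(P 0 1 L),(P 2 0 L),(P 0 0 L),L,(P 0 0 L),(P 0 0 L),(P 0 0 L),(P 0 0 L)])),(P 1 2 (R [(P 4 0 L),(P 4 0 L),(P 0 0 L),(P 0 0 L),(P 0 0 L),L,(P 0 0 L)])),(P 1 2 (R [(P 4 0 L),(P 4 0 L),(P 0 0 L),(P 0 0 L),(P 0 0 L),L,(P 0 0 L)])),(P 1 2 (R [(P 2 0 L),(P 2 0 L),(P 0 0 L),(P 0 0 L),(P 0 0 L),(P 0 0 L),(P 0 0 L),(P 0 0 L)])),(P 1 1 (R [(P 0 3 L),(P 2 0 L),(P 2 3 L),(P 0 2 L),(P 0 0 L),(P 0 3 L),(P 0 3 L),(P 0 3 L)]))]))"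
lemma ck19: "check True (delc (delc B55 (3,4)) (Suc 3,4)) k19" by code_simp

lemma vm55: "vm B55 = [(0,0), (0,1), (0,2), (0,3), (0,4), (1,0), (1,1), (1,2), (1,3), (1,4), (2,0), (2,1), (2,2), (2,3), (2,4), (3,0), (3,1), (3,2), (3,3), (3,4)]" by code_simp

lemma c55s: "check False B55 (R [k0, k1, k2, k3, k4, k5, k6, k7, k8, k9, k10, k11, k12, k13, k14, k15, k16, k17, k18, k19])"
  by (simp only: check.simps vm55 checkall.simps ck0 ck1 ck2 ck3 ck4 ck5 ck6 ck7 ck8 ck9 ck10 ck11 ck12 ck13 ck14 ck15 ck16 ck17 ck18 ck19 simp_thms not_False_eq_True)

lemma h55: "wins_second Hepzibah (board 5 5)"
  using check_sound(1)[OF c55s] by (simp add: board_cellsR B55_def)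

theorem mainTheorem3:
  shows "has_outcome (board 5 1) OV \<and> has_outcome (board 5 3) OV
    \<and> has_outcome (board 5 2) OH \<and> has_outcome (board 5 4) OH
    \<and> has_outcome (board 5 5) OSecond
    \<and> (\<forall>n::nat. n \<ge> 6 \<longrightarrow> has_outcome (board 5 n) OH)"
  by (rule main_from55[OF h55])

end
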